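(* Consider problem (P): minimize $g(x)$ subject to $q(x)\in\Theta$, under the standing assumptions below, and let $\bar x$ be a local minimizer of (P) at which MSCQ holds. Then for each $w\in\overline K$ and each $z\in\mathbb{R}^n$ with $$\nabla Q(\bar x)z+\langle w,\nabla^2Q(\bar x)w\rangle\in T^2_C\big(Q(\bar x),\nabla Q(\bar x)w\big),$$ one has $\nabla g(\bar x)z+\langle w,\nabla^2 g(\bar x)w\rangle\ge0$.
   Context: Standing assumptions: $g:\mathbb{R}^n\to\mathbb{R}$ and $q:\mathbb{R}^n\to\mathbb{R}^m$ are $C^2$; $\Theta\subset\mathbb{R}^m$ is nonempty closed convex; $\Gamma=\{x\mid q(x)\in\Theta\}$; $\bar x\in\Gamma$, $\bar y=q(\bar x)$. $\Theta$ is $C^2$-cone reducible at $\bar y$ to a pointed closed convex cone $C\subset\mathbb{R}^l$: there are a neighborhood $V$ of $\bar y$ and a $C^2$ map $h:V\to\mathbb{R}^l$ with $h(\bar y)=0$, $\nabla h(\bar y)$ surjective, and $\Theta\cap V=\{y\in V\mid h(y)\in C\}$. $Q:=h\circ q$ on $q^{-1}(V)$, and $\langle w,\nabla^2Q(\bar x)w\rangle$ denotes the vector $(w^T\nabla^2Q_j(\bar x)w)_{j=1}^l$. MSCQ (metric subregularity constraint qualification) at $\bar x$: there exist $\kappa>0$ and a neighborhood $U$ of $\bar x$ with $d(x;\Gamma)\le\kappa\,d(q(x);\Theta)$ for all $x\in U$. The critical cone is $\overline K=T_\Gamma(\bar x)\cap\{\nabla g(\bar x)\}^\perp$ with $T_\Gamma$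 the contingent cone. The outer second-order tangent set is $T^2_C(y,d)=\{v\mid \exists t_k\downarrow0:\ d(y+t_kd+\tfrac12t_k^2v;C)=o(t_k^2)\}$. *)

theory Defs
  imports "HOL-Analysis.Analysis"
begin

text \<open>C^2 on an open set S, with first derivative Df and second derivative D2f
  (Frechet derivatives, as bounded linear maps); D2f x w w is the quadratic form.\<close>
definition C2_on :: "'a::euclidean_space set \<Rightarrow> ('a \<Rightarrow> 'b::euclidean_space)
    \<Rightarrow> ('a \<Rightarrow> 'a \<Rightarrow>\<^sub>L 'b) \<Rightarrow> ('a \<Rightarrow> 'a \<Rightarrow>\<^sub>L 'a \<Rightarrow>\<^sub>L 'b) \<Rightarrow> bool" where
  "C2_on S f Df D2f \<longleftrightarrow> open S \<and>
     (\<forall>x\<in>S. (f has_derivative blinfun_apply (Df x)) (at x)) \<and>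
     (\<forall>x\<in>S. (Df has_derivative blinfun_apply (D2f x)) (at x)) \<and>
     continuous_on S D2f"

definition contingent_cone :: "'a::real_normed_vector set \<Rightarrow> 'a \<Rightarrow> 'a set" where
  "contingent_cone S x = {d. \<exists>(t::nat \<Rightarrow> real) (dk::nat \<Rightarrow> 'a).
      (\<forall>k. t k > 0) \<and> t \<longlonglongrightarrow> 0 \<and> dk \<longlonglongrightarrow> d \<and> (\<forall>k. x + t k *\<^sub>R dk k \<in> S)}"

definition outer_second_order_tangent :: "'a::real_normed_vector set \<Rightarrow> 'a \<Rightarrow> 'a \<Rightarrow> 'a set" where
  "outer_second_order_tangent C y d = {v. \<exists>t::nat \<Rightarrow> real.
      (\<forall>k. t k > 0) \<and> t \<longlonglongrightarrow> 0 \<and>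
      (\<lambda>k. infdist (y + t k *\<^sub>R d + ((t k)\<^sup>2 / 2) *\<^sub>R v) C / (t k)\<^sup>2) \<longlonglongrightarrow> 0}"

definition pointed_cone :: "'a::real_vector set \<Rightarrow> bool" where
  "pointed_cone C \<longleftrightarrow> cone C \<and> C \<inter> uminus ` C = {0}"

end

theory Submission
  imports Defs
begin


lemma peano2:
  fixes f :: "'a::real_normed_vector \<Rightarrow> 'b::real_normed_vector"
  assumes S: "open S" "x \<in> S"
    and df: "\<And>y. y \<in> S \<Longrightarrow> (f has_derivative blinfun_apply (Df y)) (at y)"
    and d2: "(Df has_derivative blinfun_apply D2) (at x)"
  shows "((\<lambda>t. (f (x + t *\<^sub>R w + (t\<^sup>2/2) *\<^sub>R z) - f x - t *\<^sub>R Df x w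
             - (t\<^sup>2/2) *\<^sub>R (Df x z + D2 w w)) /\<^sub>R t\<^sup>2) \<longlongrightarrow> 0) (at 0)"
proof -
  define \<gamma> where "\<gamma> t = x + t *\<^sub>R w + (t\<^sup>2/2) *\<^sub>R z" for t :: real
  define b where "b = Df x z + D2 w w"
  define \<psi> where "\<psi> t = f (\<gamma> t) - f x - t *\<^sub>R Df x w - (t\<^sup>2/2) *\<^sub>R b" for t
  define \<psi>' where "\<psi>' t = Df (\<gamma> t) (w + t *\<^sub>R z) - Df x w - t *\<^sub>R b" for t
  have \<gamma>d: "(\<gamma> has_derivative (\<lambda>h. h *\<^sub>R (w + t *\<^sub>R z))) (at t)" for t
    unfolding \<gamma>_def
    apply (rule derivative_eq_intros refl)+
    apply (auto simp: algebra_simps)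
    done
  have "isCont \<gamma> 0" using \<gamma>d has_derivative_continuous by blast
  moreover have "\<gamma> 0 = x" by (simp add: \<gamma>_def)
  ultimately obtain d0 where d0: "d0 > 0" "\<And>t. \<bar>t\<bar> < d0 \<Longrightarrow> \<gamma> t \<in> S"
  proof -
    have "\<forall>\<^sub>F t in at 0. \<gamma> t \<in> S"
      using topological_tendstoD[OF \<open>isCont \<gamma> 0\<close>[unfolded isCont_def]] S \<open>\<gamma> 0 = x\<close> by auto
    then obtain d where "d > 0" "\<And>t. t \<noteq> 0 \<Longrightarrow> dist t 0 < d \<Longrightarrow> \<gamma> t \<in> S"
      by (auto simp: eventually_at)
    then show ?thesis using that[of d] S \<open>\<gamma> 0 = x\<close> by (metis dist_real_def diff_zero)
  qed
  have \<psi>d: "(\<psi> has_derivative (\<lambda>h. h *\<^sub>R \<psi>' t)) (at t)" if "\<bar>t\<bar> < d0" for t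
  proof -
    have "(f \<circ> \<gamma> has_derivative (\<lambda>h. Df (\<gamma> t) (h *\<^sub>R (w + t *\<^sub>R z)))) (at t)"
      using diff_chain_at[OF \<gamma>d df[OF d0(2)[OF that]]] by (simp add: o_def)
    then show ?thesis unfolding \<psi>_def \<psi>'_def o_def
      by (auto intro!: derivative_eq_intros simp: blinfun.bilinear_simps algebra_simps)
  qed
  have \<psi>'d: "(\<psi>' has_derivative (\<lambda>h. 0)) (at 0)"
  proof -
    have "((Df \<circ> \<gamma>) has_derivative (\<lambda>h. D2 (h *\<^sub>R w))) (at 0)"
      using diff_chain_at[OF \<gamma>d[of 0], of Df] d2 \<open>\<gamma> 0 = x\<close> by (simp add: o_def)
    then have 1: "((\<lambda>t. Df (\<gamma> t)) has_derivative (\<lambda>h. D2 (h *\<^sub>R w))) (at 0)"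
      by (simp add: o_def)
    have A: "((\<lambda>t. Df (\<gamma> t) (w + t *\<^sub>R z)) has_derivative
        (\<lambda>h. Df (\<gamma> 0) (h *\<^sub>R z) + D2 (h *\<^sub>R w) (w + 0 *\<^sub>R z))) (at 0)"
      by (rule blinfun.FDERIV[OF 1]) (auto intro!: derivative_eq_intros)
    have B: "(\<psi>' has_derivative (\<lambda>h. (Df (\<gamma> 0) (h *\<^sub>R z) + D2 (h *\<^sub>R w) (w + 0 *\<^sub>R z)) - 0 - h *\<^sub>R b)) (at 0)"
      unfolding \<psi>'_def
      by (intro has_derivative_diff A has_derivative_const has_derivative_scaleR_left has_derivative_ident)
    show ?thesis
      by (rule has_derivative_eq_rhs[OF B]) (auto simp: b_def \<open>\<gamma> 0 = x\<close> blinfun.bilinear_simps scaleR_add_right)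
  qed
  have psi0: "\<psi> 0 = 0" "\<psi>' 0 = 0" using \<open>\<gamma> 0 = x\<close> by (auto simp: \<psi>_def \<psi>'_def)
  have small: "\<exists>d>0. \<forall>s. \<bar>s\<bar> < d \<longrightarrow> norm (\<psi>' s) \<le> \<epsilon> * \<bar>s\<bar>" if "\<epsilon> > 0" for \<epsilon>
  proof -
    have "((\<lambda>y. norm (\<psi>' y - \<psi>' 0 - 0) / norm (y - 0)) \<longlongrightarrow> 0) (at (0::real))"
      using \<psi>'d unfolding has_derivative_iff_norm by simp
    then have "\<forall>\<^sub>F y in at 0. norm (\<psi>' y) / \<bar>y\<bar> < \<epsilon>"
      using that psi0 by (auto simp: tendsto_iff dist_real_def)
    then obtain d where d: "d > 0" "\<And>y. y \<noteq> 0 \<Longrightarrow> dist y 0 < d \<Longrightarrow> norm (\<psi>' y) / \<bar>y\<bar> < \<epsilon>"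
      by (auto simp: eventually_at)
    have "norm (\<psi>' s) \<le> \<epsilon> * \<bar>s\<bar>" if "\<bar>s\<bar> < d" for s
    proof (cases "s = 0")
      case True then show ?thesis using psi0 by simp
    next
      case False
      then have "norm (\<psi>' s) / \<bar>s\<bar> < \<epsilon>" using d that by auto
      then show ?thesis using False by (simp add: divide_less_eq less_imp_le)
    qed
    then show ?thesis using d by blast
  qed
  have "\<forall>\<^sub>F t in at 0. dist (\<psi> t /\<^sub>R t\<^sup>2) 0 < e" if "e > 0" for e
  proof -
    obtain d where d: "d > 0" "\<And>s. \<bar>s\<bar> < d \<Longrightarrow> norm (\<psi>' s) \<le> (e/2) * \<bar>s\<bar>"
      using small[of "e/2"] \<open>e > 0\<close> by auto
    have "dist (\<psi> t /\<^sub>R t\<^sup>2) 0 < e" if t: "t \<noteq> 0" "\<bar>t\<bar> < min d d0" for t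
    proof -
      have "norm (\<psi> t - \<psi> 0) \<le> ((e/2) * \<bar>t\<bar>) * norm (t - 0)"
      proof (rule differentiable_bound[of "closed_segment 0 t" \<psi> "\<lambda>s h. h *\<^sub>R \<psi>' s"])
        fix s assume s: "s \<in> closed_segment 0 t"
        then have "\<bar>s\<bar> \<le> \<bar>t\<bar>"
          by (auto simp: closed_segment_eq_real_ivl split: if_splits)
        then show "(\<psi> has_derivative (\<lambda>h. h *\<^sub>R \<psi>' s)) (at s within closed_segment 0 t)"
          using \<psi>d t by (auto intro: has_derivative_at_withinI)
        have "onorm (\<lambda>h. h *\<^sub>R \<psi>' s) = norm (\<psi>' s)"
          using onorm_scaleR_left[OF bounded_linear_ident, of "\<psi>' s"] onorm_id[where 'a=real] by simp
        also have "\<dots> \<le> (e/2) * \<bar>s\<bar>" using d \<open>\<bar>s\<bar> \<le> \<bar>t\<bar>\<close> t by auto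
        also have "\<dots> \<le> (e/2) * \<bar>t\<bar>" using \<open>\<bar>s\<bar> \<le> \<bar>t\<bar>\<close> \<open>e > 0\<close> by auto
        finally show "onorm (\<lambda>h. h *\<^sub>R \<psi>' s) \<le> (e/2) * \<bar>t\<bar>" .
      qed auto
      then have "norm (\<psi> t) \<le> (e/2) * t\<^sup>2" using psi0 by (simp add: power2_eq_square abs_mult_self_eq)
      moreover have "t\<^sup>2 > 0" using t by simp
      ultimately have "norm (\<psi> t) / t\<^sup>2 \<le> e/2"
        by (simp add: pos_divide_le_eq mult.commute)
      moreover have "norm (\<psi> t /\<^sub>R t\<^sup>2) = norm (\<psi> t) / t\<^sup>2" by (simp add: divide_inverse_commute)
      ultimately have "norm (\<psi> t /\<^sub>R t\<^sup>2) \<le> e/2" by simp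
      then show ?thesis using \<open>e > 0\<close> by simp
    qed
    then show ?thesis using d \<open>d0 > 0\<close> unfolding eventually_at by (auto intro!: exI[of _ "min d d0"])
  qed
  then have "((\<lambda>t. \<psi> t /\<^sub>R t\<^sup>2) \<longlongrightarrow> 0) (at 0)" by (simp add: tendsto_iff)
  then show ?thesis by (simp add: \<psi>_def \<gamma>_def b_def)
qed


lemma right_inv_blinfun:
  fixes A :: "'a::euclidean_space \<Rightarrow>\<^sub>L 'b::euclidean_space"
  assumes "surj (blinfun_apply A)"
  obtains R :: "'b \<Rightarrow>\<^sub>L 'a" where "\<And>v. A (R v) = v"
proof -
  have "linear (blinfun_apply A)" using blinfun.bounded_linear_right bounded_linear.linear by blast
  then obtain g where g: "linear g" "blinfun_apply A \<circ> g = id"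
    using real_vector.linear_surjective_right_inverse assms by blast
  have "bounded_linear g" using g(1) linear_conv_bounded_linear by blast
  then have "blinfun_apply (Blinfun g) = g" by (rule bounded_linear_Blinfun_apply)
  then show ?thesis using that[of "Blinfun g"] g(2) by (metis comp_apply id_apply)
qed

lemma metric_reg:
  fixes h :: "'a::euclidean_space \<Rightarrow> 'b::euclidean_space"
  assumes V: "open V" "y0 \<in> V"
    and hd: "\<And>y. y \<in> V \<Longrightarrow> (h has_derivative blinfun_apply (Dh y)) (at y)"
    and cont: "isCont Dh y0"
    and sj: "surj (blinfun_apply (Dh y0))"
  shows "\<exists>L \<delta>. \<delta> > 0 \<and> L \<ge> 0 \<and> (\<forall>y u. dist y y0 < \<delta> \<and> dist (h y) u < \<delta> \<longrightarrow>
            (\<exists>y'. y' \<in> V \<and> h y' = u \<and> dist y y' \<le> L * dist (h y) u))"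
proof -
  obtain R :: "'b \<Rightarrow>\<^sub>L 'a" where R: "\<And>v. Dh y0 (R v) = v"
    using right_inv_blinfun[OF sj] by blast
  define c where "c = norm R + 1"
  have c: "c > 0" "norm R \<le> c" unfolding c_def by (auto simp: add_nonneg_pos)
  obtain \<eta>1 where \<eta>1: "\<eta>1 > 0" "\<And>y. dist y y0 < \<eta>1 \<Longrightarrow> dist (Dh y) (Dh y0) < 1/(2*c)"
  proof -
    have "1/(2*c) > 0" using c by simp
    then show ?thesis using cont that unfolding continuous_at_eps_delta by blast
  qed
  obtain \<eta>2 where \<eta>2: "\<eta>2 > 0" "ball y0 \<eta>2 \<subseteq> V" using V openE by blast
  define \<eta> where "\<eta> = min \<eta>1 \<eta>2"
  have \<eta>: "\<eta> > 0" "\<And>y. dist y y0 < \<eta> \<Longrightarrow> y \<in> V \<and> norm (Dh y0 - Dh y) \<le> 1/(2*c)"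
  proof -
    show "\<eta> > 0" using \<eta>1 \<eta>2 by (simp add: \<eta>_def)
    fix y assume "dist y y0 < \<eta>"
    then have a: "dist y y0 < \<eta>1" "dist y y0 < \<eta>2" by (auto simp: \<eta>_def)
    then have "y \<in> V" using \<eta>2 by (auto simp: dist_commute)
    moreover have "norm (Dh y0 - Dh y) = dist (Dh y) (Dh y0)" by (simp add: dist_norm norm_minus_commute)
    ultimately show "y \<in> V \<and> norm (Dh y0 - Dh y) \<le> 1/(2*c)" using \<eta>1(2)[OF a(1)] by simp
  qed
  define r where "r = \<eta> / (2*c)"
  have r: "r > 0" using \<eta> c by (simp add: r_def)
  define \<delta> where "\<delta> = min (\<eta>/2) (r/2)"
  have "\<delta> > 0" using \<eta> r by (simp add: \<delta>_def)
  have main: "\<exists>y'. y' \<in> V \<and> h y' = u \<and> dist y y' \<le> (2*c) * dist (h y) u"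
    if y: "dist y y0 < \<delta>" and u: "dist (h y) u < \<delta>" for y u
  proof -
    define T where "T s = s - (h (y + R s) - u)" for s
    define K where "K = cball (0::'b) r"
    have inK: "dist (y + R s) y0 < \<eta>" if "s \<in> K" for s
    proof -
      have "norm (R s) \<le> norm R * norm s" by (rule norm_blinfun)
      also have "\<dots> \<le> c * r" using that c r by (intro mult_mono) (auto simp: K_def)
      also have "\<dots> = \<eta>/2" using c by (simp add: r_def)
      finally have "norm (R s) \<le> \<eta>/2" .
      have "dist y y0 < \<eta>/2" using y by (simp add: \<delta>_def)
      have "dist (y + R s) y0 \<le> dist (y + R s) y + dist y y0" by (rule dist_triangle)
        moreover have "dist (y + R s) y = norm (R s)" by (simp add: dist_norm)
        ultimately show ?thesis
        using \<open>norm (R s) \<le> \<eta>/2\<close> \<open>dist y y0 < \<eta>/2\<close> by linarith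
    qed
    have Td: "(T has_derivative blinfun_apply ((Dh y0 - Dh (y + R s)) o\<^sub>L R)) (at s within K)"
      if "s \<in> K" for s
    proof -
      have "((\<lambda>s. y + R s) has_derivative blinfun_apply R) (at s)"
        by (auto intro!: derivative_eq_intros)
      from diff_chain_at[OF this hd] have "((\<lambda>s. h (y + R s)) has_derivative (\<lambda>v. Dh (y + R s) (R v))) (at s)"
        using \<eta>(2)[OF inK[OF that]] by (simp add: o_def)
      then have "(T has_derivative (\<lambda>v. v - (Dh (y + R s) (R v) - 0))) (at s)"
        unfolding T_def by (intro has_derivative_diff has_derivative_ident has_derivative_const)
      then have Tat: "(T has_derivative (\<lambda>v. v - (Dh (y + R s) (R v) - 0))) (at s)" .
        have eq: "blinfun_apply ((Dh y0 - Dh (y + R s)) o\<^sub>L R) = (\<lambda>v. v - (Dh (y + R s) (R v) - 0))"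
          by (rule ext) (simp add: R blinfun.diff_left)
        show ?thesis using Tat eq by (simp add: has_derivative_at_withinI)
    qed
    have Tb: "onorm (blinfun_apply ((Dh y0 - Dh (y + R s)) o\<^sub>L R)) \<le> 1/2" if "s \<in> K" for s
    proof -
      have "onorm (blinfun_apply ((Dh y0 - Dh (y + R s)) o\<^sub>L R)) = norm ((Dh y0 - Dh (y + R s)) o\<^sub>L R)"
        by (simp add: norm_blinfun.rep_eq)
      also have "\<dots> \<le> norm (Dh y0 - Dh (y + R s)) * norm R" by (rule norm_blinfun_compose)
      also have "\<dots> \<le> (1/(2*c)) * c" using \<eta>(2)[OF inK[OF that]] c by (intro mult_mono) auto
      also have "\<dots> = 1/2" using c by simp
      finally show ?thesis .
    qed
    have lip: "norm (T s - T s') \<le> 1/2 * norm (s - s')" if "s \<in> K" "s' \<in> K" for s s'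
      by (rule differentiable_bound[of K, OF _ Td Tb that]) (auto simp: K_def)
    have T0: "T 0 = u - h y" by (simp add: T_def)
    have "0 \<in> K" using r by (simp add: K_def)
    have "T ` K \<subseteq> K"
    proof
      fix v assume "v \<in> T ` K" then obtain s where s: "s \<in> K" "v = T s" by auto
      have "norm (T s) \<le> norm (T s - T 0) + norm (T 0)" using norm_triangle_sub[of "T s" "T 0"] by simp
      also have "\<dots> \<le> 1/2 * norm s + dist (h y) u" using lip[OF s(1) \<open>0 \<in> K\<close>] T0
        by (simp add: dist_norm norm_minus_commute)
      also have "\<dots> \<le> r" using s(1) u by (simp add: K_def \<delta>_def)
      finally show "v \<in> K" using s by (simp add: K_def)
    qed
    obtain s where s: "s \<in> K" "T s = s"
    proof -
      have "\<exists>!x\<in>K. T x = x"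
      proof (rule Banach_fix)
        show "complete K" unfolding K_def by (rule compact_imp_complete[OF compact_cball])
        show "K \<noteq> {}" using \<open>0 \<in> K\<close> by auto
        show "dist (T x) (T y) \<le> 1/2 * dist x y" if "x \<in> K" "y \<in> K" for x y
          using lip[OF that] by (simp add: dist_norm)
      qed (use \<open>T ` K \<subseteq> K\<close> in auto)
      then show ?thesis using that by blast
    qed
    have hs: "h (y + R s) = u" using s(2) by (simp add: T_def)
    have "norm s \<le> norm (T s - T 0) + norm (T 0)" using s(2) norm_triangle_sub[of "T s" "T 0"] by simp
    also have "\<dots> \<le> 1/2 * norm s + dist (h y) u" using lip[OF s(1) \<open>0 \<in> K\<close>] T0
      by (simp add: dist_norm norm_minus_commute)
    finally have ns: "norm s \<le> 2 * dist (h y) u" by simp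
    have "dist y (y + R s) = norm (R s)" by (simp add: dist_norm)
    also have "\<dots> \<le> norm R * norm s" by (rule norm_blinfun)
    also have "\<dots> \<le> c * (2 * dist (h y) u)" using c ns by (intro mult_mono) auto
    finally show ?thesis using hs \<eta>(2)[OF inK[OF s(1)]] by (auto simp: mult.assoc)
  qed
  show ?thesis using main \<open>\<delta> > 0\<close> c by (intro exI[of _ "2*c"] exI[of _ \<delta>]) auto
qed


lemma sdr: "(a::real) /\<^sub>R b = a / b" by (simp add: divide_inverse_commute)

lemma o_le:
  fixes F G s :: "nat \<Rightarrow> real"
  assumes "\<forall>\<^sub>F k in sequentially. 0 \<le> F k \<and> F k \<le> G k" "(\<lambda>k. G k / s k) \<longlonglongrightarrow> 0" "\<And>k. s k > 0"
  shows "(\<lambda>k. F k / s k) \<longlonglongrightarrow> 0"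
proof (rule tendsto_sandwich[of "\<lambda>k. 0" _ _ "\<lambda>k. G k / s k"])
  show "\<forall>\<^sub>F k in sequentially. 0 \<le> F k / s k" using assms(1,3)
    by (auto elim!: eventually_mono intro: divide_nonneg_pos)
  show "\<forall>\<^sub>F k in sequentially. F k / s k \<le> G k / s k" using assms(1,3)
    by (auto elim!: eventually_mono intro: divide_right_mono less_imp_le)
qed (use assms(2) in auto)

theorem lemma4p4:
  fixes g :: "real^'n \<Rightarrow> real" and q :: "real^'n \<Rightarrow> real^'m"
    and Dg :: "real^'n \<Rightarrow> ((real^'n) \<Rightarrow>\<^sub>L real)"
    and D2g :: "real^'n \<Rightarrow> ((real^'n) \<Rightarrow>\<^sub>L (real^'n) \<Rightarrow>\<^sub>L real)"
    and Theta :: "(real^'m) set" and xbar :: "real^'n"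
    and V :: "(real^'m) set" and h :: "real^'m \<Rightarrow> real^'l" and C :: "(real^'l) set"
    and DQ :: "real^'n \<Rightarrow> ((real^'n) \<Rightarrow>\<^sub>L (real^'l))"
    and D2Q :: "real^'n \<Rightarrow> ((real^'n) \<Rightarrow>\<^sub>L (real^'n) \<Rightarrow>\<^sub>L (real^'l))"
    and w z :: "real^'n"
  assumes g_C2: "C2_on UNIV g Dg D2g"
    and q_C2: "\<exists>Dq D2q. C2_on UNIV q Dq D2q"
    and Theta: "Theta \<noteq> {}" "closed Theta" "convex Theta"
    and xbar_feas: "q xbar \<in> Theta"
    and V: "open V" "q xbar \<in> V"
    and h_C2: "\<exists>Dh D2h. C2_on V h Dh D2h \<and> surj (blinfun_apply (Dh (q xbar)))"
    and h0: "h (q xbar) = 0"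
    and C: "closed C" "convex C" "pointed_cone C"
    and reduc: "Theta \<inter> V = {y \<in> V. h y \<in> C}"
    and Q_C2: "C2_on (q -` V) (h \<circ> q) DQ D2Q"
    and locmin: "\<exists>\<epsilon>>0. \<forall>x. q x \<in> Theta \<and> dist x xbar < \<epsilon> \<longrightarrow> g xbar \<le> g x"
    and MSCQ: "\<exists>\<kappa>>0. \<exists>U. open U \<and> xbar \<in> U \<and>
                 (\<forall>x\<in>U. infdist x {x. q x \<in> Theta} \<le> \<kappa> * infdist (q x) Theta)"
    and w_crit: "w \<in> contingent_cone {x. q x \<in> Theta} xbar" "Dg xbar w = 0"
    and z: "DQ xbar z + D2Q xbar w w
              \<in> outer_second_order_tangent C ((h \<circ> q) xbar) (DQ xbar w)"
  shows "Dg xbar z + D2g xbar w w \<ge> 0"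
proof -
  obtain Dq D2q where qC: "C2_on UNIV q Dq D2q" using q_C2 by blast
  have qd: "(q has_derivative blinfun_apply (Dq x)) (at x)" for x using qC by (simp add: C2_on_def)
  have qcont: "isCont q x" for x using qd has_derivative_continuous by blast
  obtain Dh D2h where hC: "C2_on V h Dh D2h" and sj: "surj (blinfun_apply (Dh (q xbar)))"
    using h_C2 by blast
  have hd: "\<And>y. y \<in> V \<Longrightarrow> (h has_derivative blinfun_apply (Dh y)) (at y)"
    using hC by (simp add: C2_on_def)
  have "(Dh has_derivative blinfun_apply (D2h (q xbar))) (at (q xbar))" using hC V(2) by (auto simp: C2_on_def)
  then have Dhcont: "isCont Dh (q xbar)" by (rule has_derivative_continuous)
  have hcont: "isCont h (q xbar)" using hd[OF V(2)] has_derivative_continuous by blast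
  have gd: "\<And>x. x \<in> UNIV \<Longrightarrow> (g has_derivative blinfun_apply (Dg x)) (at x)"
    and g2: "\<And>x. (Dg has_derivative blinfun_apply (D2g x)) (at x)"
    using g_C2 by (auto simp: C2_on_def)
  have Qd: "\<And>y. y \<in> q -` V \<Longrightarrow> ((h \<circ> q) has_derivative blinfun_apply (DQ y)) (at y)"
    and Q2: "(DQ has_derivative blinfun_apply (D2Q xbar)) (at xbar)"
    using Q_C2 V(2) by (auto simp: C2_on_def)
  have openQ: "open (q -` V)" using Q_C2 by (simp add: C2_on_def)
  have xbarQ: "xbar \<in> q -` V" using V(2) by simp
  have "q xbar \<in> Theta \<inter> V" using xbar_feas V(2) by blast
  then have "h (q xbar) \<in> C" using reduc by auto
  then have "0 \<in> C" using h0 by simp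
  obtain L \<delta> where \<delta>: "\<delta> > 0" "L \<ge> 0" and MR: "\<And>y u. dist y (q xbar) < \<delta> \<Longrightarrow> dist (h y) u < \<delta> \<Longrightarrow>
      \<exists>y'. y' \<in> V \<and> h y' = u \<and> dist y y' \<le> L * dist (h y) u"
    using metric_reg[OF V hd Dhcont sj] by blast
  obtain \<delta>2 where \<delta>2: "\<delta>2 > 0" "\<And>y. dist y (q xbar) < \<delta>2 \<Longrightarrow> dist (h y) (h (q xbar)) < \<delta>"
    using hcont \<delta>(1) unfolding continuous_at_eps_delta by blast
  define \<delta>3 where "\<delta>3 = min \<delta> \<delta>2"
  have "\<delta>3 > 0" using \<delta> \<delta>2 by (simp add: \<delta>3_def)
  have HR: "infdist y Theta \<le> L * infdist (h y) C" if y3: "dist y (q xbar) < \<delta>3" for y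
  proof -
    obtain c where c: "c \<in> C" "infdist (h y) C = dist (h y) c"
      using infdist_attains_inf[OF C(1)] \<open>0 \<in> C\<close> by blast
    have "dist (h y) c \<le> dist (h y) 0" using c infdist_le[OF \<open>0 \<in> C\<close>, of "h y"] by simp
    also have "\<dots> < \<delta>" using \<delta>2(2)[of y] that h0 by (simp add: \<delta>3_def)
    finally obtain y' where y': "y' \<in> V" "h y' = c" "dist y y' \<le> L * dist (h y) c"
      using MR[of y c] y3 by (auto simp: \<delta>3_def)
    have "y' \<in> Theta \<inter> V" using y' c by (subst reduc) auto
    then have "y' \<in> Theta" by blast
    then have "infdist y Theta \<le> dist y y'" by (rule infdist_le)
    then show ?thesis using y' c by simp
  qed
  define v where "v = DQ xbar z + D2Q xbar w w"
  obtain t where t: "\<And>k. t k > 0" "t \<longlonglongrightarrow> 0"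
    and tz: "(\<lambda>k. infdist ((h \<circ> q) xbar + t k *\<^sub>R DQ xbar w + ((t k)\<^sup>2 / 2) *\<^sub>R v) C / (t k)\<^sup>2) \<longlonglongrightarrow> 0"
    using z unfolding outer_second_order_tangent_def v_def by blast
  define s where "s k = (t k)\<^sup>2" for k
  have s: "s k > 0" for k using t(1)[of k] by (simp add: s_def)
  have s0: "s \<longlonglongrightarrow> 0" unfolding s_def using tendsto_power[OF t(2), of 2] by simp
  have tat: "filterlim t (at 0) sequentially"
  proof (rule filterlim_atI)
    show "\<forall>\<^sub>F k in sequentially. t k \<noteq> 0" using t(1) by (intro always_eventually) (metis less_irrefl)
  qed (use t(2) in auto)
  define x where "x k = xbar + t k *\<^sub>R w + ((t k)\<^sup>2 / 2) *\<^sub>R z" for k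
  have xlim: "x \<longlonglongrightarrow> xbar" unfolding x_def
    by (auto intro!: tendsto_eq_intros t(2))
  define aQ where "aQ k = t k *\<^sub>R DQ xbar w + ((t k)\<^sup>2/2) *\<^sub>R v" for k
  have TQ0: "((\<lambda>k. ((h \<circ> q) (xbar + t k *\<^sub>R w + ((t k)\<^sup>2/2) *\<^sub>R z) - (h \<circ> q) xbar - t k *\<^sub>R DQ xbar w
             - ((t k)\<^sup>2/2) *\<^sub>R (DQ xbar z + D2Q xbar w w)) /\<^sub>R (t k)\<^sup>2) \<longlongrightarrow> 0) sequentially"
    using filterlim_compose[OF peano2[OF openQ xbarQ Qd Q2, of w z] tat] by (simp add: o_def)
  have eqQ: "norm (((h \<circ> q) (xbar + t k *\<^sub>R w + ((t k)\<^sup>2/2) *\<^sub>R z) - (h \<circ> q) xbar - t k *\<^sub>R DQ xbar w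
             - ((t k)\<^sup>2/2) *\<^sub>R (DQ xbar z + D2Q xbar w w)) /\<^sub>R (t k)\<^sup>2) = norm (h (q (x k)) - aQ k) / s k" for k
  proof -
    have "(h \<circ> q) (xbar + t k *\<^sub>R w + ((t k)\<^sup>2/2) *\<^sub>R z) - (h \<circ> q) xbar - t k *\<^sub>R DQ xbar w
             - ((t k)\<^sup>2/2) *\<^sub>R (DQ xbar z + D2Q xbar w w) = h (q (x k)) - aQ k"
      by (simp add: x_def aQ_def v_def h0 diff_diff_eq)
    moreover have "norm (E /\<^sub>R (t k)\<^sup>2) = norm E / s k" for E :: "real^'l"
      using s[of k] by (simp add: s_def divide_inverse_commute)
    ultimately show ?thesis by simp
  qed
  have TQ: "(\<lambda>k. norm (h (q (x k)) - aQ k) / s k) \<longlonglongrightarrow> 0"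
    using tendsto_norm[OF TQ0] unfolding eqQ by simp
  have tz': "(\<lambda>k. infdist (aQ k) C / s k) \<longlonglongrightarrow> 0"
    using tz h0 by (simp add: aQ_def s_def)
  have IQ: "(\<lambda>k. infdist (h (q (x k))) C / s k) \<longlonglongrightarrow> 0"
  proof (rule o_le[OF _ _ s])
    show "\<forall>\<^sub>F k in sequentially. 0 \<le> infdist (h (q (x k))) C \<and>
        infdist (h (q (x k))) C \<le> infdist (aQ k) C + norm (h (q (x k)) - aQ k)"
    proof (intro always_eventually allI conjI)
      fix k
      show "0 \<le> infdist (h (q (x k))) C" by (rule infdist_nonneg)
      show "infdist (h (q (x k))) C \<le> infdist (aQ k) C + norm (h (q (x k)) - aQ k)"
        using infdist_triangle[of "h (q (x k))" C "aQ k"] by (simp add: dist_norm)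
    qed
    show "(\<lambda>k. (infdist (aQ k) C + norm (h (q (x k)) - aQ k)) / s k) \<longlonglongrightarrow> 0"
      using tendsto_add[OF tz' TQ] by (simp add: add_divide_distrib)
  qed
  have qlim: "(\<lambda>k. q (x k)) \<longlonglongrightarrow> q xbar" by (rule isCont_tendsto_compose[OF qcont xlim])
  have ev1: "\<forall>\<^sub>F k in sequentially. dist (q (x k)) (q xbar) < \<delta>3"
    using qlim \<open>\<delta>3 > 0\<close> by (simp add: tendsto_iff)
  have IT: "(\<lambda>k. infdist (q (x k)) Theta / s k) \<longlonglongrightarrow> 0"
  proof (rule o_le[OF _ _ s])
    show "\<forall>\<^sub>F k in sequentially. 0 \<le> infdist (q (x k)) Theta \<and>
        infdist (q (x k)) Theta \<le> L * infdist (h (q (x k))) C"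
      using ev1 by eventually_elim (auto intro: HR infdist_nonneg)
    show "(\<lambda>k. L * infdist (h (q (x k))) C / s k) \<longlonglongrightarrow> 0"
      using tendsto_mult[OF tendsto_const[of L] IQ] by simp
  qed
  obtain \<kappa> U where U: "\<kappa> > 0" "open U" "xbar \<in> U"
    and MS: "\<And>x. x \<in> U \<Longrightarrow> infdist x {x. q x \<in> Theta} \<le> \<kappa> * infdist (q x) Theta"
    using MSCQ by blast
  define \<Gamma> where "\<Gamma> = {x. q x \<in> Theta}"
  have ev2: "\<forall>\<^sub>F k in sequentially. x k \<in> U" using topological_tendstoD[OF xlim U(2,3)] .
  have IG: "(\<lambda>k. infdist (x k) \<Gamma> / s k) \<longlonglongrightarrow> 0"
  proof (rule o_le[OF _ _ s])
    show "\<forall>\<^sub>F k in sequentially. 0 \<le> infdist (x k) \<Gamma> \<and> infdist (x k) \<Gamma> \<le> \<kappa> * infdist (q (x k)) Theta"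
      unfolding \<Gamma>_def using ev2 by eventually_elim (auto intro: MS infdist_nonneg)
    show "(\<lambda>k. \<kappa> * infdist (q (x k)) Theta / s k) \<longlonglongrightarrow> 0"
      using tendsto_mult[OF tendsto_const[of \<kappa>] IT] by simp
  qed
  have "closed (q -` Theta)" using continuous_closed_vimage[OF Theta(2)] qcont by blast
  then have clG: "closed \<Gamma>" by (simp add: \<Gamma>_def vimage_def)
  have neG: "\<Gamma> \<noteq> {}" using xbar_feas by (auto simp: \<Gamma>_def)
  have "\<forall>k. \<exists>p. p \<in> \<Gamma> \<and> infdist (x k) \<Gamma> = dist (x k) p"
  proof
    fix k
    obtain p where "p \<in> \<Gamma>" "infdist (x k) \<Gamma> = dist (x k) p" using infdist_attains_inf[OF clG neG] by blast
    then show "\<exists>p. p \<in> \<Gamma> \<and> infdist (x k) \<Gamma> = dist (x k) p" by blast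
  qed
  from choice[OF this] obtain x' where "\<forall>k. x' k \<in> \<Gamma> \<and> infdist (x k) \<Gamma> = dist (x k) (x' k)" by blast
  then have x': "\<And>k. x' k \<in> \<Gamma>" "\<And>k. infdist (x k) \<Gamma> = dist (x k) (x' k)" by auto
  have dlim: "(\<lambda>k. dist (x k) (x' k)) \<longlonglongrightarrow> 0"
  proof -
    have "(\<lambda>k. infdist (x k) \<Gamma> / s k * s k) \<longlonglongrightarrow> 0 * 0" by (rule tendsto_mult[OF IG s0])
    moreover have "infdist (x k) \<Gamma> / s k * s k = dist (x k) (x' k)" for k using s[of k] x'(2)[of k] by simp
    ultimately show ?thesis by simp
  qed
  have x'lim: "x' \<longlonglongrightarrow> xbar"
  proof -
    have "(\<lambda>k. norm (x' k - x k)) \<longlonglongrightarrow> 0" using dlim by (simp add: dist_norm norm_minus_commute)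
    then have "(\<lambda>k. x' k - x k) \<longlonglongrightarrow> 0" by (rule tendsto_norm_zero_cancel)
    from tendsto_add[OF xlim this] show ?thesis by simp
  qed
  obtain \<epsilon> where \<epsilon>: "\<epsilon> > 0" "\<And>x. q x \<in> Theta \<Longrightarrow> dist x xbar < \<epsilon> \<Longrightarrow> g xbar \<le> g x"
    using locmin by blast
  have ev3: "\<forall>\<^sub>F k in sequentially. g xbar \<le> g (x' k)"
  proof -
    have "\<forall>\<^sub>F k in sequentially. dist (x' k) xbar < \<epsilon>" using x'lim \<epsilon>(1) by (simp add: tendsto_iff)
    then show ?thesis
    proof eventually_elim
      case (elim k)
      have "q (x' k) \<in> Theta" using x'(1)[of k] by (simp add: \<Gamma>_def)
      then show ?case using \<epsilon>(2) elim by blast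
    qed
  qed
  have Dgcont: "continuous_on UNIV Dg"
    using g2 has_derivative_continuous continuous_at_imp_continuous_on by blast
  obtain M where M: "M > 0" "\<And>y. y \<in> cball xbar 1 \<Longrightarrow> norm (Dg y) \<le> M"
  proof -
    have "compact (Dg ` cball xbar 1)"
      by (rule compact_continuous_image[OF continuous_on_subset[OF Dgcont] compact_cball]) simp
    then obtain M where "M > 0" "\<forall>y\<in>Dg ` cball xbar 1. norm y \<le> M"
      using compact_imp_bounded[of "Dg ` cball xbar 1"] unfolding bounded_pos by blast
    then show ?thesis using that by blast
  qed
  have lipg: "\<bar>g a - g b\<bar> \<le> M * dist a b" if "a \<in> cball xbar 1" "b \<in> cball xbar 1" for a b
  proof -
    have "norm (g a - g b) \<le> M * norm (a - b)"
    proof (rule differentiable_bound[of "cball xbar 1" g "\<lambda>x. blinfun_apply (Dg x)" M a b])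
      show "(g has_derivative blinfun_apply (Dg y)) (at y within cball xbar 1)" for y
        using gd[of y] by (simp add: has_derivative_at_withinI)
      show "onorm (blinfun_apply (Dg y)) \<le> M" if "y \<in> cball xbar 1" for y
        using M(2)[OF that] by (simp add: norm_blinfun.rep_eq)
    qed (use that in auto)
    then show ?thesis by (simp add: dist_norm)
  qed
  have ev4: "\<forall>\<^sub>F k in sequentially. x k \<in> cball xbar 1 \<and> x' k \<in> cball xbar 1"
  proof -
    have "\<forall>\<^sub>F k in sequentially. x k \<in> ball xbar 1" using topological_tendstoD[OF xlim open_ball[of xbar 1]] by simp
    moreover have "\<forall>\<^sub>F k in sequentially. x' k \<in> ball xbar 1" using topological_tendstoD[OF x'lim open_ball[of xbar 1]] by simp
    ultimately show ?thesis by eventually_elim auto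
  qed
  have GD: "(\<lambda>k. \<bar>g (x' k) - g (x k)\<bar> / s k) \<longlonglongrightarrow> 0"
  proof (rule o_le[OF _ _ s])
    show "\<forall>\<^sub>F k in sequentially. 0 \<le> \<bar>g (x' k) - g (x k)\<bar> \<and> \<bar>g (x' k) - g (x k)\<bar> \<le> M * infdist (x k) \<Gamma>"
      using ev4
    proof eventually_elim
      case (elim k)
      then show ?case using lipg[of "x' k" "x k"] x'(2)[of k] by (simp add: dist_commute)
    qed
    show "(\<lambda>k. M * infdist (x k) \<Gamma> / s k) \<longlonglongrightarrow> 0"
      using tendsto_mult[OF tendsto_const[of M] IG] by simp
  qed
  define A where "A = Dg xbar z + D2g xbar w w"
  have TG0: "((\<lambda>k. (g (xbar + t k *\<^sub>R w + ((t k)\<^sup>2/2) *\<^sub>R z) - g xbar - t k *\<^sub>R Dg xbar w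
             - ((t k)\<^sup>2/2) *\<^sub>R (Dg xbar z + D2g xbar w w)) /\<^sub>R (t k)\<^sup>2) \<longlongrightarrow> 0) sequentially"
    using filterlim_compose[OF peano2[where x=xbar and w=w and z=z, OF open_UNIV UNIV_I gd g2] tat] by (simp add: o_def)
  have eqG: "(g (xbar + t k *\<^sub>R w + ((t k)\<^sup>2/2) *\<^sub>R z) - g xbar - t k *\<^sub>R Dg xbar w
             - ((t k)\<^sup>2/2) *\<^sub>R (Dg xbar z + D2g xbar w w)) /\<^sub>R (t k)\<^sup>2 = (g (x k) - g xbar) / s k - A/2" for k
  proof -
    have "(g (xbar + t k *\<^sub>R w + ((t k)\<^sup>2/2) *\<^sub>R z) - g xbar - t k *\<^sub>R Dg xbar w
             - ((t k)\<^sup>2/2) *\<^sub>R (Dg xbar z + D2g xbar w w)) /\<^sub>R (t k)\<^sup>2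
          = (g (x k) - g xbar - s k / 2 * A) / s k"
    proof -
      have e1: "xbar + t k *\<^sub>R w + (s k/2) *\<^sub>R z = x k" by (simp add: x_def s_def)
      have e2: "(s k/2) *\<^sub>R (Dg xbar z + D2g xbar w w) = s k / 2 * A" by (simp add: A_def)
      have "(g (xbar + t k *\<^sub>R w + ((t k)\<^sup>2/2) *\<^sub>R z) - g xbar - t k *\<^sub>R Dg xbar w
             - ((t k)\<^sup>2/2) *\<^sub>R (Dg xbar z + D2g xbar w w)) /\<^sub>R (t k)\<^sup>2
          = (g (x k) - g xbar - s k / 2 * A) /\<^sub>R s k"
        unfolding s_def[symmetric] e1 e2 w_crit(2) by (simp only: scaleR_zero_right diff_zero)
      also have "\<dots> = (g (x k) - g xbar - s k / 2 * A) / s k" by (rule sdr)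
      finally show ?thesis .
    qed
    also have "\<dots> = (g (x k) - g xbar) / s k - (s k / 2 * A) / s k" by (rule diff_divide_distrib)
    also have "\<dots> = (g (x k) - g xbar) / s k - A / 2" using s[of k] by simp
    finally show ?thesis .
  qed
  have TG: "(\<lambda>k. (g (x k) - g xbar) / s k) \<longlonglongrightarrow> A/2"
    using tendsto_add[OF TG0[unfolded eqG] tendsto_const[of "A/2"]] by simp
  have GD': "(\<lambda>k. (g (x' k) - g (x k)) / s k) \<longlonglongrightarrow> 0"
  proof -
    have ea: "\<bar>(g (x' k) - g (x k)) / s k\<bar> = \<bar>g (x' k) - g (x k)\<bar> / s k" for k
      using s[of k] by (simp add: abs_divide abs_of_pos)
    have "(\<lambda>k. \<bar>(g (x' k) - g (x k)) / s k\<bar>) \<longlonglongrightarrow> 0" unfolding ea by (rule GD)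
    then show ?thesis by (rule tendsto_rabs_zero_cancel)
  qed
  have fin: "(\<lambda>k. (g (x' k) - g xbar) / s k) \<longlonglongrightarrow> A/2"
  proof -
    have e: "(g (x k) - g xbar) / s k + (g (x' k) - g (x k)) / s k = (g (x' k) - g xbar) / s k" for k
      unfolding add_divide_distrib[symmetric] by simp
    show ?thesis using tendsto_add[OF TG GD'] unfolding e by simp
  qed
  have "0 \<le> A/2"
    by (rule tendsto_lowerbound[OF fin]) (use ev3 s in \<open>auto elim!: eventually_mono intro!: divide_nonneg_pos\<close>)
  then show ?thesis by (simp add: A_def)
qed

end
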